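(* Let $z^+=(z_1^+,\dots,z_n^+)$ and $z^-=(z_1^-,\dots,z_n^-)$ be sequences of integers, $I_1=\{i:z_i^+>0\}$, $I_2=\{i:z_i^->0\}$, and $f_z(a)=\sum_i|z_i^+-a_i^+|+\sum_i|z_i^--a_i^-|$ for bi-sequences $a=(a^+,a^-)$. Let $d\in B_n$ satisfy $f_z(d)=\min_{a\in B_n}f_z(a)$. (1) If $d_i^+>0$ for some $i\notin I_1$, then there exists $d_*\in B_n$ with $d_{*i}^+=0$ for all $i\notin I_1$ and $f_z(d_* )=f_z(d)$. (2) If $d_i^->0$ for some $i\notin I_2$, then there exists $d_*\in B_n$ with $d_{*i}^-=0$ for all $i\notin I_2$ and $f_z(d_* )=f_z(d)$.
   Context: $B_n$ is the set of all bi-degree sequences $a=(a^+,a^-)$ (out-degrees $a_i^+$, in-degrees $a_i^-$) of simple directed graphs (no loops, no multiple edges) on nodes $\{1,\dots,n\}$. *)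

theory Defs
  imports Main
begin

text \<open>Nodes are 0..n-1 (the paper's 1..n shifted). Out/in-degrees are integers,
defined as 0 outside the node set so that bi-degree sequences are determined uniquely.\<close>

definition simple_digraph :: "nat \<Rightarrow> (nat \<times> nat) set \<Rightarrow> bool" where
  "simple_digraph n E \<longleftrightarrow> E \<subseteq> {0..<n} \<times> {0..<n} \<and> (\<forall>i. (i, i) \<notin> E)"

definition out_deg :: "nat \<Rightarrow> (nat \<times> nat) set \<Rightarrow> nat \<Rightarrow> int" where
  "out_deg n E i = (if i < n then int (card {j. (i, j) \<in> E}) else 0)"

definition in_deg :: "nat \<Rightarrow> (nat \<times> nat) set \<Rightarrow> nat \<Rightarrow> int" where
  "in_deg n E i = (if i < n then int (card {j. (j, i) \<in> E}) else 0)"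

definition bideg_seqs :: "nat \<Rightarrow> ((nat \<Rightarrow> int) \<times> (nat \<Rightarrow> int)) set" where
  "bideg_seqs n = {(out_deg n E, in_deg n E) | E. simple_digraph n E}"

definition fz :: "nat \<Rightarrow> (nat \<Rightarrow> int) \<Rightarrow> (nat \<Rightarrow> int) \<Rightarrow> (nat \<Rightarrow> int) \<times> (nat \<Rightarrow> int) \<Rightarrow> int" where
  "fz n zp zm a = (\<Sum>i<n. \<bar>zp i - fst a i\<bar>) + (\<Sum>i<n. \<bar>zm i - snd a i\<bar>)"

end

theory Submission
  imports Defs
begin

lemma sum_upd:
  assumes "finite A" "k \<in> A"
  shows "(\<Sum>i\<in>A. \<bar>z i - (if i = k then v else g i)\<bar>) = (\<Sum>i\<in>A. \<bar>z i - g i\<bar>) - \<bar>z k - g k\<bar> + \<bar>z k - (v::int)\<bar>"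
proof -
  have a: "(\<Sum>i\<in>A. \<bar>z i - (if i = k then v else g i)\<bar>) = \<bar>z k - (if k = k then v else g k)\<bar> + (\<Sum>i\<in>A-{k}. \<bar>z i - (if i = k then v else g i)\<bar>)"
    by (rule sum.remove[OF assms])
  have b: "(\<Sum>i\<in>A-{k}. \<bar>z i - (if i = k then v else g i)\<bar>) = (\<Sum>i\<in>A-{k}. \<bar>z i - g i\<bar>)"
    by (rule sum.cong) auto
  have c: "(\<Sum>i\<in>A. \<bar>z i - g i\<bar>) = \<bar>z k - g k\<bar> + (\<Sum>i\<in>A-{k}. \<bar>z i - g i\<bar>)"
    by (rule sum.remove[OF assms])
  show ?thesis using a b c by simp
qed

lemma out_del:
  assumes "simple_digraph n E" "(i,j) \<in> E"
  shows "out_deg n (E - {(i,j)}) = (out_deg n E)(i := out_deg n E i - 1)"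
    and "in_deg n (E - {(i,j)}) = (in_deg n E)(j := in_deg n E j - 1)"
    and "out_deg n E i \<ge> 1" and "in_deg n E j \<ge> 1" and "i < n" and "j < n"
proof -
  have sub: "E \<subseteq> {0..<n} \<times> {0..<n}" using assms(1) unfolding simple_digraph_def by auto
  show iN: "i < n" and jN: "j < n" using sub assms(2) by auto
  have f1: "finite {j'. (i,j') \<in> E}"
    by (rule finite_subset[of _ "{0..<n}"]) (use sub in auto)
  have f2: "finite {j'. (j',j) \<in> E}"
    by (rule finite_subset[of _ "{0..<n}"]) (use sub in auto)
  have m1: "j \<in> {j'. (i,j') \<in> E}" using assms(2) by simp
  have m2: "i \<in> {j'. (j',j) \<in> E}" using assms(2) by simp
  have c1: "card {j'. (i,j') \<in> E} \<ge> 1" using f1 m1 card_0_eq[OF f1] by (cases "card {j'. (i,j') \<in> E}") auto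
  have c2: "card {j'. (j',j) \<in> E} \<ge> 1" using f2 m2 card_0_eq[OF f2] by (cases "card {j'. (j',j) \<in> E}") auto
  show "out_deg n E i \<ge> 1" using c1 iN unfolding out_deg_def by simp
  show "in_deg n E j \<ge> 1" using c2 jN unfolding in_deg_def by simp
  show "out_deg n (E - {(i,j)}) = (out_deg n E)(i := out_deg n E i - 1)"
  proof
    fix k
    show "out_deg n (E - {(i,j)}) k = ((out_deg n E)(i := out_deg n E i - 1)) k"
    proof (cases "k = i")
      case True
      have "{j'. (i,j') \<in> E - {(i,j)}} = {j'. (i,j') \<in> E} - {j}" by auto
      then have "card {j'. (i,j') \<in> E - {(i,j)}} = card {j'. (i,j') \<in> E} - 1"
        using card_Diff_singleton[OF m1] by simp
      then show ?thesis using True iN c1 unfolding out_deg_def by (simp add: of_nat_diff)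
    next
      case False
      have "{j'. (k,j') \<in> E - {(i,j)}} = {j'. (k,j') \<in> E}" using False by auto
      then show ?thesis using False unfolding out_deg_def by simp
    qed
  qed
  show "in_deg n (E - {(i,j)}) = (in_deg n E)(j := in_deg n E j - 1)"
  proof
    fix k
    show "in_deg n (E - {(i,j)}) k = ((in_deg n E)(j := in_deg n E j - 1)) k"
    proof (cases "k = j")
      case True
      have "{j'. (j',j) \<in> E - {(i,j)}} = {j'. (j',j) \<in> E} - {i}" by auto
      then have "card {j'. (j',j) \<in> E - {(i,j)}} = card {j'. (j',j) \<in> E} - 1"
        using card_Diff_singleton[OF m2] by simp
      then show ?thesis using True jN c2 unfolding in_deg_def by (simp add: of_nat_diff)
    next
      case False
      have "{j'. (j',k) \<in> E - {(i,j)}} = {j'. (j',k) \<in> E}" using False by auto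
      then show ?thesis using False unfolding in_deg_def by simp
    qed
  qed
qed

lemma remove_out:
  assumes "simple_digraph n E" "(i,j) \<in> E" "zp i \<le> 0"
  shows "fz n zp zm (out_deg n (E - {(i,j)}), in_deg n (E - {(i,j)}))
         \<le> fz n zp zm (out_deg n E, in_deg n E)"
proof -
  note D = out_del[OF assms(1,2)]
  have iA: "i \<in> {..<n}" and jA: "j \<in> {..<n}" using D(5,6) by auto
  show ?thesis unfolding fz_def fst_conv snd_conv D(1,2)
    using D(3,4) assms(3) by (simp add: sum_upd[OF _ iA] sum_upd[OF _ jA])
qed

lemma remove_in:
  assumes "simple_digraph n E" "(j,i) \<in> E" "zm i \<le> 0"
  shows "fz n zp zm (out_deg n (E - {(j,i)}), in_deg n (E - {(j,i)}))
         \<le> fz n zp zm (out_deg n E, in_deg n E)"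
proof -
  note D = out_del[OF assms(1,2)]
  have iA: "i \<in> {..<n}" and jA: "j \<in> {..<n}" using D(5,6) by auto
  show ?thesis unfolding fz_def fst_conv snd_conv D(1,2)
    using D(3,4) assms(3) by (simp add: sum_upd[OF _ iA] sum_upd[OF _ jA])
qed

lemma iterate:
  assumes fin: "finite F"
    and sE: "simple_digraph n E"
    and minE: "\<forall>a \<in> bideg_seqs n. fz n zp zm (out_deg n E, in_deg n E) \<le> fz n zp zm a"
    and H: "\<And>E' x. simple_digraph n E' \<Longrightarrow> x \<in> E' \<Longrightarrow> x \<in> F \<Longrightarrow>
       fz n zp zm (out_deg n (E' - {x}), in_deg n (E' - {x})) \<le> fz n zp zm (out_deg n E', in_deg n E')"
  shows "F \<subseteq> E \<Longrightarrow> simple_digraph n (E - F) \<and>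
     fz n zp zm (out_deg n (E - F), in_deg n (E - F)) = fz n zp zm (out_deg n E, in_deg n E)"
  using fin H
proof (induction F)
  case empty
  then show ?case using sE by simp
next
  case (insert x F)
  have IH: "simple_digraph n (E - F) \<and>
     fz n zp zm (out_deg n (E - F), in_deg n (E - F)) = fz n zp zm (out_deg n E, in_deg n E)"
    using insert by auto
  have eq: "E - insert x F = (E - F) - {x}" by auto
  have xin: "x \<in> E - F" using insert by auto
  have le: "fz n zp zm (out_deg n ((E-F) - {x}), in_deg n ((E-F) - {x})) \<le> fz n zp zm (out_deg n (E-F), in_deg n (E-F))"
    using insert.prems(2)[OF conjunct1[OF IH] xin] by simp
  have s2: "simple_digraph n ((E-F) - {x})" using IH unfolding simple_digraph_def by auto
  then have "(out_deg n ((E-F) - {x}), in_deg n ((E-F) - {x})) \<in> bideg_seqs n"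
    unfolding bideg_seqs_def by blast
  then have ge: "fz n zp zm (out_deg n E, in_deg n E) \<le> fz n zp zm (out_deg n ((E-F) - {x}), in_deg n ((E-F) - {x}))"
    using minE by blast
  show ?case unfolding eq using s2 le ge IH by simp
qed

theorem proposition3:
  fixes n :: nat and zp zm :: "nat \<Rightarrow> int"
    and d :: "(nat \<Rightarrow> int) \<times> (nat \<Rightarrow> int)"
  defines "I1 \<equiv> {i. i < n \<and> zp i > 0}"
      and "I2 \<equiv> {i. i < n \<and> zm i > 0}"
  assumes d_in: "d \<in> bideg_seqs n"
      and d_min: "\<forall>a \<in> bideg_seqs n. fz n zp zm d \<le> fz n zp zm a"
  shows "((\<exists>i. i < n \<and> i \<notin> I1 \<and> fst d i > 0) \<longrightarrow>
            (\<exists>ds \<in> bideg_seqs n. (\<forall>i. i < n \<and> i \<notin> I1 \<longrightarrow> fst ds i = 0)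
                 \<and> fz n zp zm ds = fz n zp zm d))
       \<and> ((\<exists>i. i < n \<and> i \<notin> I2 \<and> snd d i > 0) \<longrightarrow>
            (\<exists>ds \<in> bideg_seqs n. (\<forall>i. i < n \<and> i \<notin> I2 \<longrightarrow> snd ds i = 0)
                 \<and> fz n zp zm ds = fz n zp zm d))"
proof -
  obtain E where sE: "simple_digraph n E" and dE: "d = (out_deg n E, in_deg n E)"
    using d_in unfolding bideg_seqs_def by blast
  have minE: "\<forall>a \<in> bideg_seqs n. fz n zp zm (out_deg n E, in_deg n E) \<le> fz n zp zm a"
    using d_min dE by simp
  have sub: "E \<subseteq> {0..<n} \<times> {0..<n}" using sE unfolding simple_digraph_def by auto
  have finE: "finite E" by (rule finite_subset[OF sub]) auto
  define F1 where "F1 = {x \<in> E. zp (fst x) \<le> 0}"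
  define F2 where "F2 = {x \<in> E. zm (snd x) \<le> 0}"
  have R1: "simple_digraph n (E - F1) \<and>
     fz n zp zm (out_deg n (E - F1), in_deg n (E - F1)) = fz n zp zm (out_deg n E, in_deg n E)"
    by (rule iterate[OF _ sE minE]) (auto simp: F1_def finE intro: remove_out)
  have R2: "simple_digraph n (E - F2) \<and>
     fz n zp zm (out_deg n (E - F2), in_deg n (E - F2)) = fz n zp zm (out_deg n E, in_deg n E)"
    by (rule iterate[OF _ sE minE]) (auto simp: F2_def finE intro: remove_in)
  have A1: "\<forall>i. i < n \<and> i \<notin> I1 \<longrightarrow> out_deg n (E - F1) i = 0"
  proof (intro allI impI)
    fix i assume "i < n \<and> i \<notin> I1"
    then have "{j. (i,j) \<in> E - F1} = {}" unfolding I1_def F1_def by auto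
    then have "card {j. (i,j) \<in> E - F1} = 0" by (metis card.empty)
    then show "out_deg n (E - F1) i = 0" unfolding out_deg_def by presburger
  qed
  have A2: "\<forall>i. i < n \<and> i \<notin> I2 \<longrightarrow> in_deg n (E - F2) i = 0"
  proof (intro allI impI)
    fix i assume "i < n \<and> i \<notin> I2"
    then have "{j. (j,i) \<in> E - F2} = {}" unfolding I2_def F2_def by auto
    then have "card {j. (j,i) \<in> E - F2} = 0" by (metis card.empty)
    then show "in_deg n (E - F2) i = 0" unfolding in_deg_def by presburger
  qed
  have B1: "(out_deg n (E - F1), in_deg n (E - F1)) \<in> bideg_seqs n"
    using R1 unfolding bideg_seqs_def by blast
  have B2: "(out_deg n (E - F2), in_deg n (E - F2)) \<in> bideg_seqs n"
    using R2 unfolding bideg_seqs_def by blast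
  have "\<exists>ds \<in> bideg_seqs n. (\<forall>i. i < n \<and> i \<notin> I1 \<longrightarrow> fst ds i = 0) \<and> fz n zp zm ds = fz n zp zm d"
    by (rule bexI[OF _ B1]) (use A1 R1 dE in simp)
  moreover have "\<exists>ds \<in> bideg_seqs n. (\<forall>i. i < n \<and> i \<notin> I2 \<longrightarrow> snd ds i = 0) \<and> fz n zp zm ds = fz n zp zm d"
    by (rule bexI[OF _ B2]) (use A2 R2 dE in simp)
  ultimately show ?thesis by blast
qed

end
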